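(* Consider $K$ patches in an environment alternating periodically $e_1,e_2,e_1,e_2,\dots$ (state $e_1$ at even generations). Assume $\mathbb E(N_i(w)\log^+N_i(w))<\infty$ and $m_i(w)>0$ for all $i$ and $w\in\{e_1,e_2\}$, and that $D$ is irreducible and aperiodic. Let $\rho>0$ be such that $\rho^2$ is the maximal (Perron) eigenvalue of the two-generation mean matrix $A^{(2)}$ with entries $a_{ij}=\sum_{k=1}^K m_i(e_1)d_{ik}m_k(e_2)d_{kj}$. Then $$ 2\log\rho=\max\{R(f)-I(f): f\in\mathcal F_{\mathcal E}\}. $$
   Context: Model with environment: at each generation, every individual in patch $i$ independently produces $N_i(w)$ offspring, $w$ being the current environment state, with mean $m_i(w)$; each offspring independently moves from $i$ to $j$ with probability $d_{ij}$ ($D$ stochastic, environment-independent). $(X_n)$ is the Markov chain with transition matrix $D$. $\mathcal E:=\{1,\dots,K\}^2$ (ordered pairs of patches) and $B$ is the transition matrix of the Markov chain $(X_{2n},X_{2n+1})_{n\ge0}$ on $\mathcal E$, i.e. $B_{(i,j),(k,l)}=d_{jk}d_{kl}$. $\mathcal F_{\mathcal E}:=\{(f_E)_{E\in\mathcal E}: f_E\ge0,\ \sum_Ef_E=1\}$. For $f\in\mathcal F_{\mathcal E}$: $I(f):=\sup\{\sum_{E\in\mathcal E}f_E\log(v_E/(vB)_E): v=(v_E)_{E\in\mathcal E},\ v_E>0\ \forall E\}$ (possibly $+\infty$) and $R(f):=\sum_{E=(i,j)\in\mathcal E}f_E\log\big(m_i(e_1)m_j(e_2)\big)$. *)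

theory Defs
  imports "HOL-Probability.Probability"
begin

text \<open>Patches are indexed by 0..K-1. The dispersal matrix D is d :: nat => nat => real.\<close>

definition stochastic_mat :: "nat \<Rightarrow> (nat \<Rightarrow> nat \<Rightarrow> real) \<Rightarrow> bool" where
  "stochastic_mat K d \<longleftrightarrow> (\<forall>i<K. \<forall>j<K. 0 \<le> d i j) \<and> (\<forall>i<K. (\<Sum>j<K. d i j) = 1)"

fun mpow :: "nat \<Rightarrow> (nat \<Rightarrow> nat \<Rightarrow> real) \<Rightarrow> nat \<Rightarrow> nat \<Rightarrow> nat \<Rightarrow> real" where
  "mpow K d 0 i j = (if i = j then 1 else 0)"
| "mpow K d (Suc n) i j = (\<Sum>k<K. mpow K d n i k * d k j)"

definition irreducible_mat :: "nat \<Rightarrow> (nat \<Rightarrow> nat \<Rightarrow> real) \<Rightarrow> bool" where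
  "irreducible_mat K d \<longleftrightarrow> (\<forall>i<K. \<forall>j<K. \<exists>n>0. mpow K d n i j > 0)"

definition aperiodic_mat :: "nat \<Rightarrow> (nat \<Rightarrow> nat \<Rightarrow> real) \<Rightarrow> bool" where
  "aperiodic_mat K d \<longleftrightarrow> (\<forall>i<K. Gcd {n::nat. n > 0 \<and> mpow K d n i i > 0} = 1)"

definition mean_off :: "nat pmf \<Rightarrow> real" where
  "mean_off p = measure_pmf.expectation p real"

definition logplus :: "real \<Rightarrow> real" where
  "logplus x = max 0 (ln x)"

definition A2 :: "nat \<Rightarrow> (nat \<Rightarrow> nat \<Rightarrow> real) \<Rightarrow> (nat \<Rightarrow> real) \<Rightarrow> (nat \<Rightarrow> real) \<Rightarrow> nat \<Rightarrow> nat \<Rightarrow> real" where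
  "A2 K d m1 m2 i j = (\<Sum>k<K. m1 i * d i k * m2 k * d k j)"

definition is_eigenvalue :: "nat \<Rightarrow> (nat \<Rightarrow> nat \<Rightarrow> real) \<Rightarrow> complex \<Rightarrow> bool" where
  "is_eigenvalue K A lam \<longleftrightarrow> (\<exists>x :: nat \<Rightarrow> complex. (\<exists>i<K. x i \<noteq> 0) \<and>
      (\<forall>i<K. (\<Sum>j<K. complex_of_real (A i j) * x j) = lam * x i))"

definition perron_eigenvalue :: "nat \<Rightarrow> (nat \<Rightarrow> nat \<Rightarrow> real) \<Rightarrow> real \<Rightarrow> bool" where
  "perron_eigenvalue K A r \<longleftrightarrow> is_eigenvalue K A (complex_of_real r) \<and>
      (\<forall>lam. is_eigenvalue K A lam \<longrightarrow> cmod lam \<le> r)"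

definition pairsK :: "nat \<Rightarrow> (nat \<times> nat) set" where
  "pairsK K = {..<K} \<times> {..<K}"

definition Bmat :: "(nat \<Rightarrow> nat \<Rightarrow> real) \<Rightarrow> nat \<times> nat \<Rightarrow> nat \<times> nat \<Rightarrow> real" where
  "Bmat d E E' = d (snd E) (fst E') * d (fst E') (snd E')"

definition vB :: "nat \<Rightarrow> (nat \<Rightarrow> nat \<Rightarrow> real) \<Rightarrow> (nat \<times> nat \<Rightarrow> real) \<Rightarrow> nat \<times> nat \<Rightarrow> real" where
  "vB K d v E = (\<Sum>E'\<in>pairsK K. v E' * Bmat d E' E)"

definition FE :: "nat \<Rightarrow> (nat \<times> nat \<Rightarrow> real) set" where
  "FE K = {f. (\<forall>E\<in>pairsK K. 0 \<le> f E) \<and> (\<Sum>E\<in>pairsK K. f E) = 1}"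

text \<open>One summand f_E log(v_E/(vB)_E), with conventions 0 * anything = 0 and
  log(v/0) = +infinity for v > 0.\<close>
definition dv_term :: "real \<Rightarrow> real \<Rightarrow> real \<Rightarrow> ereal" where
  "dv_term fE vE wE = (if fE = 0 then 0 else if wE = 0 then \<infinity> else ereal (fE * ln (vE / wE)))"

definition I_rate :: "nat \<Rightarrow> (nat \<Rightarrow> nat \<Rightarrow> real) \<Rightarrow> (nat \<times> nat \<Rightarrow> real) \<Rightarrow> ereal" where
  "I_rate K d f = (SUP v\<in>{v :: nat \<times> nat \<Rightarrow> real. \<forall>E\<in>pairsK K. 0 < v E}.
      \<Sum>E\<in>pairsK K. dv_term (f E) (v E) (vB K d v E))"

definition R_fun :: "nat \<Rightarrow> (nat \<Rightarrow> real) \<Rightarrow> (nat \<Rightarrow> real) \<Rightarrow> (nat \<times> nat \<Rightarrow> real) \<Rightarrow> real" where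
  "R_fun K m1 m2 f = (\<Sum>E\<in>pairsK K. f E * ln (m1 (fst E) * m2 (snd E)))"

end

theory Submission
  imports Defs
begin



lemma mpow_add:
  assumes "j < K"
  shows "mpow K A (a + b) i j = (\<Sum>k<K. mpow K A a i k * mpow K A b k j)"
  using assms
proof (induction b arbitrary: j)
  case 0
  then show ?case by (simp add: if_distrib cong: if_cong)
next
  case (Suc b)
  have "mpow K A (a + Suc b) i j = (\<Sum>k<K. mpow K A (a+b) i k * A k j)" by simp
  also have "\<dots> = (\<Sum>k<K. (\<Sum>q<K. mpow K A a i q * mpow K A b q k) * A k j)"
    using Suc.IH by (intro sum.cong) auto
  also have "\<dots> = (\<Sum>q<K. mpow K A a i q * (\<Sum>k<K. mpow K A b q k * A k j))"
    by (simp add: sum_distrib_left sum_distrib_right mult.assoc) (rule sum.swap)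
  finally show ?case by simp
qed

lemma mpow_one: assumes "i < K" shows "mpow K A (Suc 0) i j = A i j"
proof -
  have "mpow K A (Suc 0) i j = (\<Sum>k<K. if i = k then A k j else 0)"
    by (simp only: mpow.simps, rule sum.cong) auto
  then show ?thesis using assms by simp
qed

lemma mpow_Suc_left:
  assumes "i < K" "j < K"
  shows "mpow K A (Suc n) i j = (\<Sum>k<K. A i k * mpow K A n k j)"
proof -
  have "mpow K A (Suc n) i j = (\<Sum>k<K. mpow K A (Suc 0) i k * mpow K A n k j)"
    using mpow_add[of j K A "Suc 0" n i] assms by simp
  also have "\<dots> = (\<Sum>k<K. A i k * mpow K A n k j)"
    using mpow_one[OF assms(1)] by simp
  finally show ?thesis .
qed

lemma mpow_nonneg:
  assumes "\<forall>i<K. \<forall>j<K. 0 \<le> A i j" "i < K" "j < K"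
  shows "0 \<le> mpow K A n i j"
  using assms(2,3)
proof (induction n arbitrary: j)
  case 0 then show ?case by simp
next
  case (Suc n)
  then show ?case using assms(1) by (auto intro!: sum_nonneg)
qed

lemma mpow_ge:
  assumes "\<forall>i<K. \<forall>j<K. 0 \<le> A i j" "i < K" "j < K" "k < K"
  shows "mpow K A a i k * mpow K A b k j \<le> mpow K A (a + b) i j"
proof -
  have "mpow K A a i k * mpow K A b k j \<le> (\<Sum>k<K. mpow K A a i k * mpow K A b k j)"
    using assms by (intro member_le_sum) (auto intro!: mult_nonneg_nonneg mpow_nonneg)
  then show ?thesis using mpow_add[OF assms(3)] by simp
qed

lemma mpow_transpose:
  assumes "i < K" "j < K"
  shows "mpow K (\<lambda>i j. A j i) n i j = mpow K A n j i"
  using assms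
proof (induction n arbitrary: i j)
  case 0 then show ?case by simp
next
  case (Suc n)
  have "mpow K (\<lambda>i j. A j i) (Suc n) i j = (\<Sum>k<K. mpow K A n k i * A j k)"
    using Suc by simp
  also have "\<dots> = mpow K A (Suc n) j i"
    using mpow_Suc_left[of j K i A n] Suc.prems by (simp add: mult.commute)
  finally show ?case .
qed

lemma irreducible_transpose:
  assumes "irreducible_mat K A"
  shows "irreducible_mat K (\<lambda>i j. A j i)"
  using assms unfolding irreducible_mat_def by (metis mpow_transpose)




lemma finite_bw:
  fixes y :: "nat \<Rightarrow> nat \<Rightarrow> real"
  assumes bnd: "\<forall>n. \<forall>i<K. \<bar>y n i\<bar> \<le> B"
  shows "\<exists>r. strict_mono r \<and> (\<forall>i<K. convergent (\<lambda>n. y (r n) i))"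
proof -
  have "m \<le> K \<Longrightarrow> \<exists>r. strict_mono r \<and> (\<forall>i<m. convergent (\<lambda>n. y (r n) i))" for m
  proof (induction m)
    case 0
    show ?case by (intro exI[of _ id]) (auto simp: strict_mono_def)
  next
    case (Suc m)
    then obtain r where r: "strict_mono r" "\<forall>i<m. convergent (\<lambda>n. y (r n) i)" by auto
    have "bounded (range (\<lambda>n. y (r n) m))"
      using bnd Suc.prems by (intro boundedI[of _ B]) auto
    from bounded_imp_convergent_subsequence[OF this] obtain l r2
      where r2: "strict_mono r2" "((\<lambda>n. y (r n) m) \<circ> r2) \<longlonglongrightarrow> l" by blast
    have "strict_mono (r \<circ> r2)" using r(1) r2(1) by (rule strict_mono_o)
    moreover have "convergent (\<lambda>n. y ((r \<circ> r2) n) i)" if "i < Suc m" for i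
    proof (cases "i = m")
      case True
      then show ?thesis using r2(2) by (auto simp: convergent_def o_def)
    next
      case False
      then have "convergent (\<lambda>n. y (r n) i)" using r(2) that by auto
      from convergent_subseq_convergent[OF this r2(1)] show ?thesis by (simp add: o_def)
    qed
    ultimately show ?case by blast
  qed
  from this[of K] show ?thesis by simp
qed

lemma perron_vec:
  fixes A :: "nat \<Rightarrow> nat \<Rightarrow> real"
  assumes K: "K \<ge> 1" and nn: "\<forall>i<K. \<forall>j<K. 0 \<le> A i j" and irr: "irreducible_mat K A"
  shows "\<exists>lam \<psi>. (\<forall>i<K. 0 < \<psi> i) \<and> (\<forall>i<K. (\<Sum>j<K. A i j * \<psi> j) = lam * \<psi> i)"
proof -
  define S where "S = {y::nat\<Rightarrow>real. (\<forall>i<K. 0 \<le> y i) \<and> (\<Sum>i<K. y i) = 1}"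
  define L where "L = {lam. \<exists>y\<in>S. \<forall>i<K. lam * y i \<le> (\<Sum>j<K. A i j * y j)}"
  define T where "T = (\<Sum>i<K. \<Sum>j<K. A i j)"
  have S_le1: "y i \<le> 1" if "y \<in> S" "i < K" for y i
  proof -
    have "y i \<le> (\<Sum>i<K. y i)" using that by (intro member_le_sum) (auto simp: S_def)
    then show ?thesis using that by (simp add: S_def)
  qed
  have Lbd: "lam \<le> T" if lamL: "lam \<in> L" for lam
  proof -
    obtain y where y: "y \<in> S" "\<forall>i<K. lam * y i \<le> (\<Sum>j<K. A i j * y j)"
      using lamL by (auto simp: L_def)
    have "lam = (\<Sum>i<K. lam * y i)" using y(1) by (simp add: S_def sum_distrib_left[symmetric])
    also have "\<dots> \<le> (\<Sum>i<K. \<Sum>j<K. A i j * y j)" using y(2) by (intro sum_mono) auto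
    also have "\<dots> \<le> T" unfolding T_def
      using nn S_le1[OF y(1)] by (intro sum_mono mult_left_le) auto
    finally show ?thesis .
  qed
  have e0: "(\<lambda>i. if i = 0 then 1 else 0) \<in> S" using K by (auto simp: S_def)
  have "0 \<in> L" unfolding L_def mem_Collect_eq
    by (rule bexI[OF _ e0]) (use nn in \<open>auto intro!: sum_nonneg\<close>)
  then have Lne: "L \<noteq> {}" by auto
  have bdd: "bdd_above L" using Lbd by (auto simp: bdd_above_def)
  define ls where "ls = Sup L"
  have ls_ge: "lam \<le> ls" if "lam \<in> L" for lam using cSup_upper[OF that bdd] by (simp add: ls_def)
  have ex: "\<forall>n. \<exists>p. snd p \<in> S \<and> (\<forall>i<K. fst p * snd p i \<le> (\<Sum>j<K. A i j * snd p j)) \<and>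
       ls - inverse (real (Suc n)) < fst p \<and> fst p \<le> ls"
  proof
    fix n
    have "ls - inverse (real (Suc n)) < ls" by simp
    then obtain lam where "lam \<in> L" "ls - inverse (real (Suc n)) < lam"
      using less_cSupE[of _ L] Lne unfolding ls_def by metis
    then show "\<exists>p. snd p \<in> S \<and> (\<forall>i<K. fst p * snd p i \<le> (\<Sum>j<K. A i j * snd p j)) \<and>
       ls - inverse (real (Suc n)) < fst p \<and> fst p \<le> ls"
      using ls_ge unfolding L_def by fastforce
  qed
  then obtain g where g: "\<And>n. snd (g n) \<in> S" "\<And>n i. i<K \<Longrightarrow> fst (g n) * snd (g n) i \<le> (\<Sum>j<K. A i j * snd (g n) j)"
    "\<And>n. ls - inverse (real (Suc n)) < fst (g n)" "\<And>n. fst (g n) \<le> ls"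
  proof -
    from choice[OF ex] obtain g where "\<forall>n. snd (g n) \<in> S \<and> (\<forall>i<K. fst (g n) * snd (g n) i \<le> (\<Sum>j<K. A i j * snd (g n) j)) \<and>
       ls - inverse (real (Suc n)) < fst (g n) \<and> fst (g n) \<le> ls" by blast
    then show ?thesis using that by blast
  qed
  define yn where "yn n = snd (g n)" for n
  define ln' where "ln' n = fst (g n)" for n
  have "\<forall>n. \<forall>i<K. \<bar>yn n i\<bar> \<le> 1"
    using g(1) S_le1 by (auto simp: yn_def S_def)
  from finite_bw[OF this] obtain r where r: "strict_mono r" "\<forall>i<K. convergent (\<lambda>n. yn (r n) i)"
    by blast
  define yl where "yl i = lim (\<lambda>n. yn (r n) i)" for i
  have yl_lim: "(\<lambda>n. yn (r n) i) \<longlonglongrightarrow> yl i" if "i < K" for i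
    using r(2) that by (simp add: yl_def convergent_LIMSEQ_iff)
  have inv_lim: "(\<lambda>n. inverse (real (Suc (r n)))) \<longlonglongrightarrow> 0"
    using LIMSEQ_subseq_LIMSEQ[OF LIMSEQ_inverse_real_of_nat r(1)] by (simp add: o_def)
  have ls_lim: "(\<lambda>n. ln' (r n)) \<longlonglongrightarrow> ls"
  proof (rule tendsto_sandwich[of "\<lambda>n. ls - inverse (real (Suc (r n)))" _ _ "\<lambda>n. ls"])
    show "\<forall>\<^sub>F n in sequentially. ls - inverse (real (Suc (r n))) \<le> ln' (r n)"
      using g(3) by (auto simp: ln'_def less_imp_le)
    show "\<forall>\<^sub>F n in sequentially. ln' (r n) \<le> ls" using g(4) by (auto simp: ln'_def)
    show "(\<lambda>n. ls - inverse (real (Suc (r n)))) \<longlonglongrightarrow> ls"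
      using tendsto_diff[OF tendsto_const inv_lim, of ls] by simp
  qed simp
  have yl_nn: "0 \<le> yl i" if "i < K" for i
    using yl_lim[OF that] g(1) that
    by (intro LIMSEQ_le_const[of "\<lambda>n. yn (r n) i"]) (auto simp: yn_def S_def)
  have "(\<lambda>n. \<Sum>i<K. yn (r n) i) \<longlonglongrightarrow> (\<Sum>i<K. yl i)"
    using yl_lim by (intro tendsto_sum) auto
  moreover have "(\<lambda>n. \<Sum>i<K. yn (r n) i) = (\<lambda>n. 1)"
    using g(1) by (auto simp: yn_def S_def)
  ultimately have "(\<Sum>i<K. yl i) = 1"
    using LIMSEQ_unique tendsto_const by metis
  with yl_nn have ylS: "yl \<in> S" by (auto simp: S_def)
  have yl_ineq: "ls * yl i \<le> (\<Sum>j<K. A i j * yl j)" if "i < K" for i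
  proof (rule LIMSEQ_le)
    show "(\<lambda>n. ln' (r n) * yn (r n) i) \<longlonglongrightarrow> ls * yl i"
      using ls_lim yl_lim[OF that] by (rule tendsto_mult)
    show "(\<lambda>n. \<Sum>j<K. A i j * yn (r n) j) \<longlonglongrightarrow> (\<Sum>j<K. A i j * yl j)"
      using yl_lim by (intro tendsto_sum tendsto_mult tendsto_const) auto
    show "\<exists>N. \<forall>n\<ge>N. ln' (r n) * yn (r n) i \<le> (\<Sum>j<K. A i j * yn (r n) j)"
      using g(2) that by (auto simp: ln'_def yn_def)
  qed
  define nn' where "nn' i j = (SOME n. n > 0 \<and> mpow K A n i j > 0)" for i j
  have nnP: "nn' i j > 0 \<and> mpow K A (nn' i j) i j > 0" if "i < K" "j < K" for i j
  proof -
    have "\<exists>n. n > 0 \<and> mpow K A n i j > 0" using irr that by (auto simp: irreducible_mat_def)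
    then show ?thesis unfolding nn'_def by (rule someI_ex)
  qed
  define N where "N = (\<Sum>i<K. \<Sum>j<K. nn' i j)"
  have nnN: "nn' i j \<le> N" if "i < K" "j < K" for i j
  proof -
    have "nn' i j \<le> (\<Sum>j<K. nn' i j)" using that by (intro member_le_sum) auto
    also have "\<dots> \<le> N" unfolding N_def using that by (intro member_le_sum) auto
    finally show ?thesis .
  qed
  obtain i1 where i1: "i1 < K" "yl i1 > 0"
  proof (rule ccontr)
    assume "\<not> thesis"
    then have "\<forall>i<K. yl i \<le> 0" using that by force
    then have "(\<Sum>i<K. yl i) \<le> 0" by (intro sum_nonpos) auto
    then show False using ylS by (simp add: S_def)
  qed
  have mnn: "0 \<le> mpow K A n i j" if "i < K" "j < K" for n i j
    using mpow_nonneg[OF nn that] .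
  have powsum_pos: "0 < (\<Sum>k\<le>N. \<Sum>j<K. mpow K A k i j * x j)"
    if "i < K" "\<forall>j<K. 0 \<le> x j" "j0 < K" "x j0 > 0" for i x j0
  proof -
    have t_nn: "0 \<le> (\<Sum>j<K. mpow K A k i j * x j)" for k
      using that mnn by (intro sum_nonneg mult_nonneg_nonneg) auto
    have "0 < mpow K A (nn' i j0) i j0 * x j0" using nnP[OF that(1,3)] that(4) by simp
    also have "\<dots> \<le> (\<Sum>j<K. mpow K A (nn' i j0) i j * x j)"
      using that mnn by (intro member_le_sum mult_nonneg_nonneg) auto
    also have "\<dots> \<le> (\<Sum>k\<le>N. \<Sum>j<K. mpow K A k i j * x j)"
      using nnN[OF that(1,3)] t_nn by (intro member_le_sum) auto
    finally show ?thesis .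
  qed
  define Av where "Av y i = (\<Sum>j<K. A i j * y j)" for y i
  have eq: "\<forall>i<K. Av yl i = ls * yl i"
  proof (rule ccontr)
    assume "\<not> ?thesis"
    then obtain i0 where i0: "i0 < K" "Av yl i0 \<noteq> ls * yl i0" by auto
    define w where "w i = Av yl i - ls * yl i" for i
    have w_nn: "\<forall>j<K. 0 \<le> w j" using yl_ineq by (auto simp: w_def Av_def)
    have w0: "w i0 > 0" using yl_ineq[OF i0(1)] i0(2) by (auto simp: w_def Av_def)
    define z where "z i = (\<Sum>k\<le>N. \<Sum>j<K. mpow K A k i j * yl j)" for i
    have zpos: "z i > 0" if "i < K" for i
      unfolding z_def using powsum_pos[of i yl i1] that yl_nn i1 by auto
    define X where "X i = (\<Sum>k\<le>N. \<Sum>j<K. mpow K A (Suc k) i j * yl j)" for i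
    have AvX: "Av z i = X i" if "i < K" for i
    proof -
      have "Av z i = (\<Sum>l<K. \<Sum>k\<le>N. \<Sum>j<K. A i l * mpow K A k l j * yl j)"
        unfolding Av_def z_def by (simp add: sum_distrib_left mult.assoc)
      also have "\<dots> = (\<Sum>k\<le>N. \<Sum>l<K. \<Sum>j<K. A i l * mpow K A k l j * yl j)"
        by (rule sum.swap)
      also have "\<dots> = (\<Sum>k\<le>N. \<Sum>j<K. \<Sum>l<K. A i l * mpow K A k l j * yl j)"
        by (rule sum.cong[OF refl], rule sum.swap)
      also have "\<dots> = (\<Sum>k\<le>N. \<Sum>j<K. (\<Sum>l<K. A i l * mpow K A k l j) * yl j)"
        by (simp add: sum_distrib_right)
      also have "\<dots> = X i"
        unfolding X_def using that by (intro sum.cong refl) (simp add: mpow_Suc_left del: mpow.simps)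
      finally show ?thesis .
    qed
    have wX: "(\<Sum>k\<le>N. \<Sum>j<K. mpow K A k i j * w j) = X i - ls * z i" if "i < K" for i
    proof -
      have "(\<Sum>k\<le>N. \<Sum>j<K. mpow K A k i j * w j) =
            (\<Sum>k\<le>N. \<Sum>j<K. mpow K A k i j * Av yl j) - ls * z i"
        unfolding w_def z_def
        by (simp add: right_diff_distrib sum_subtractf sum_distrib_left mult.left_commute)
      also have "(\<Sum>k\<le>N. \<Sum>j<K. mpow K A k i j * Av yl j) = X i"
        unfolding X_def Av_def
        by (rule sum.cong[OF refl]) (simp add: sum_distrib_left sum_distrib_right mult.assoc, rule sum.swap)
      finally show ?thesis .
    qed
    define u where "u i = Av z i - ls * z i" for i
    have upos: "u i > 0" if "i < K" for i
      using powsum_pos[OF that w_nn i0(1) w0] wX[OF that] AvX[OF that] by (simp add: u_def)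
    define \<delta> where "\<delta> = Min ((\<lambda>i. u i / z i) ` {..<K})"
    have fin: "finite ((\<lambda>i. u i / z i) ` {..<K})" and ne: "(\<lambda>i. u i / z i) ` {..<K} \<noteq> {}"
      using K by (auto simp: lessThan_empty_iff)
    have dpos: "\<delta> > 0" unfolding \<delta>_def using Min_gr_iff[OF fin ne] upos zpos by auto
    have dle: "\<delta> \<le> u i / z i" if "i < K" for i unfolding \<delta>_def using fin that by (intro Min_le) auto
    have zineq: "(ls + \<delta>) * z i \<le> Av z i" if "i < K" for i
    proof -
      have "\<delta> * z i \<le> u i" using dle[OF that] zpos[OF that] by (simp add: le_divide_eq)
      then show ?thesis by (simp add: u_def algebra_simps)
    qed
    define Z where "Z = (\<Sum>i<K. z i)"
    have Zpos: "Z > 0" unfolding Z_def using K zpos by (intro sum_pos) (auto simp: lessThan_empty_iff)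
    define zn where "zn i = z i / Z" for i
    have znS: "zn \<in> S" using zpos Zpos by (auto simp: S_def zn_def sum_divide_distrib[symmetric] Z_def less_imp_le)
    have "(ls + \<delta>) * zn i \<le> (\<Sum>j<K. A i j * zn j)" if "i < K" for i
    proof -
      have "(ls + \<delta>) * zn i = ((ls + \<delta>) * z i) / Z" by (simp add: zn_def)
      also have "\<dots> \<le> Av z i / Z" using zineq[OF that] Zpos by (simp add: divide_right_mono)
      also have "\<dots> = (\<Sum>j<K. A i j * zn j)" by (simp add: Av_def zn_def sum_divide_distrib)
      finally show ?thesis .
    qed
    then have "ls + \<delta> \<in> L" using znS by (auto simp: L_def)
    from ls_ge[OF this] dpos show False by simp
  qed
  have pw: "(\<Sum>j<K. mpow K A n i j * yl j) = ls ^ n * yl i" if "i < K" for n i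
    using that
  proof (induction n arbitrary: i)
    case 0
    have "(\<Sum>j<K. mpow K A 0 i j * yl j) = (\<Sum>j<K. if i = j then yl j else 0)"
      by (simp only: mpow.simps, rule sum.cong) auto
    then show ?case using 0 by simp
  next
    case (Suc n)
    have "(\<Sum>j<K. mpow K A (Suc n) i j * yl j) = (\<Sum>k<K. mpow K A n i k * Av yl k)"
      by (simp add: Av_def sum_distrib_left sum_distrib_right mult.assoc, rule sum.swap)
    also have "\<dots> = (\<Sum>k<K. mpow K A n i k * yl k) * ls"
      using eq by (auto simp: sum_distrib_left sum_distrib_right mult_ac intro!: sum.cong)
    also have "\<dots> = ls ^ Suc n * yl i" using Suc by simp
    finally show ?case .
  qed
  have ylpos: "\<forall>i<K. 0 < yl i"
  proof (intro allI impI)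
    fix i assume i: "i < K"
    show "0 < yl i"
    proof (rule ccontr)
      assume "\<not> 0 < yl i"
      then have "yl i = 0" using yl_nn[OF i] by simp
      have "0 < mpow K A (nn' i i1) i i1 * yl i1" using nnP[OF i i1(1)] i1 by simp
      also have "\<dots> \<le> (\<Sum>j<K. mpow K A (nn' i i1) i j * yl j)"
        using mnn yl_nn i i1 by (intro member_le_sum mult_nonneg_nonneg) auto
      also have "\<dots> = 0" using pw[OF i] \<open>yl i = 0\<close> by simp
      finally show False by simp
    qed
  qed
  show ?thesis using ylpos eq by (auto simp: Av_def)
qed




lemma even_path:
  assumes nn: "\<forall>i<K. \<forall>j<K. 0 \<le> d i j" and irr: "irreducible_mat K d"
    and ap: "aperiodic_mat K d" and ij: "i < K" "j < K"
  shows "\<exists>n>0. mpow K d (2*n) i j > 0"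
proof -
  obtain c where c: "odd c" "mpow K d c i i > 0"
  proof (rule ccontr)
    assume "\<not> thesis"
    then have "\<forall>c. mpow K d c i i > 0 \<longrightarrow> even c" using that by blast
    then have "2 dvd Gcd {n. n > 0 \<and> mpow K d n i i > 0}" by (intro Gcd_greatest) auto
    with ap ij show False by (auto simp: aperiodic_mat_def)
  qed
  obtain a where a: "a > 0" "mpow K d a i j > 0" using irr ij by (auto simp: irreducible_mat_def)
  show ?thesis
  proof (cases "even a")
    case True
    then obtain n where "a = 2*n" by blast
    with a show ?thesis by (intro exI[of _ n]) auto
  next
    case False
    then have "even (c + a)" using c(1) by auto
    then obtain n where n: "c + a = 2*n" by blast
    have "0 < mpow K d c i i * mpow K d a i j" using c a by simp
    also have "\<dots> \<le> mpow K d (c+a) i j" by (rule mpow_ge) (use nn ij in auto)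
    finally show ?thesis using n a by (intro exI[of _ n]) auto
  qed
qed

lemma A2_nonneg:
  assumes nn: "\<forall>i<K. \<forall>j<K. 0 \<le> d i j" and m1: "\<forall>i<K. 0 < m1 i" and m2: "\<forall>i<K. 0 < m2 i"
  shows "\<forall>i<K. \<forall>j<K. 0 \<le> A2 K d m1 m2 i j"
  using assms unfolding A2_def by (auto intro!: sum_nonneg mult_nonneg_nonneg simp: order_less_imp_le)

lemma A2_irr:
  assumes nn: "\<forall>i<K. \<forall>j<K. 0 \<le> d i j" and irr: "irreducible_mat K d"
    and ap: "aperiodic_mat K d" and m1: "\<forall>i<K. 0 < m1 i" and m2: "\<forall>i<K. 0 < m2 i"
  shows "irreducible_mat K (A2 K d m1 m2)"
proof -
  note Ann = A2_nonneg[OF nn m1 m2]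
  have key: "mpow K d (2*n) i j > 0 \<Longrightarrow> mpow K (A2 K d m1 m2) n i j > 0"
    if "i < K" "j < K" for n i j
    using that
  proof (induction n arbitrary: j)
    case 0 then show ?case by simp
  next
    case (Suc n)
    have "mpow K d (2*n + 2) i j = (\<Sum>k<K. mpow K d (2*n) i k * mpow K d 2 k j)"
      by (rule mpow_add) (use Suc in auto)
    with Suc.prems have sp: "0 < (\<Sum>k<K. mpow K d (2*n) i k * mpow K d 2 k j)" by simp
    obtain k where k: "k < K" "0 < mpow K d (2*n) i k * mpow K d 2 k j"
    proof (rule ccontr)
      assume "\<not> thesis"
      then have "\<forall>k<K. mpow K d (2*n) i k * mpow K d 2 k j \<le> 0" using that by force
      then have "(\<Sum>k<K. mpow K d (2*n) i k * mpow K d 2 k j) \<le> 0" by (intro sum_nonpos) auto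
      with \<open>0 < (\<Sum>k<K. mpow K d (2*n) i k * mpow K d 2 k j)\<close> show False by simp
    qed
    have nn1: "0 \<le> mpow K d (2*n) i k" and nn2: "0 \<le> mpow K d 2 k j"
      using mpow_nonneg[OF nn] Suc.prems k by auto
    have p1: "0 < mpow K d (2*n) i k" and p2: "0 < mpow K d 2 k j"
      using k(2) nn1 nn2 by (auto simp: zero_less_mult_iff)
    have "mpow K d 2 k j = (\<Sum>q<K. d k q * d q j)"
      using mpow_one[OF k(1), of d] by (simp add: numeral_2_eq_2 del: mpow.simps) (simp add: mpow_one[OF k(1)])
    obtain q where q: "q < K" "0 < d k q * d q j"
    proof (rule ccontr)
      assume "\<not> thesis"
      then have "\<forall>q<K. d k q * d q j \<le> 0" using that by force
      then have "(\<Sum>q<K. d k q * d q j) \<le> 0" by (intro sum_nonpos) auto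
      with p2 \<open>mpow K d 2 k j = (\<Sum>q<K. d k q * d q j)\<close> show False by simp
    qed
    have dnn: "0 \<le> d k q" "0 \<le> d q j" using nn k q Suc.prems by auto
    have dpos: "0 < d k q" "0 < d q j"
      using q(2) dnn by (auto simp: zero_less_mult_iff)
    have "0 < m1 k * d k q * m2 q * d q j"
      using dpos m1 m2 k q by (intro mult_pos_pos) auto
    also have "\<dots> \<le> A2 K d m1 m2 k j" unfolding A2_def
      using nn m1 m2 k q Suc.prems by (intro member_le_sum) (auto intro!: mult_nonneg_nonneg simp: order_less_imp_le)
    finally have a2pos: "0 < A2 K d m1 m2 k j" .
    have IH: "0 < mpow K (A2 K d m1 m2) n i k" using Suc.IH p1 k(1) Suc.prems by blast
    have "0 < mpow K (A2 K d m1 m2) n i k * A2 K d m1 m2 k j" using IH a2pos by simp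
    also have "\<dots> \<le> (\<Sum>k<K. mpow K (A2 K d m1 m2) n i k * A2 K d m1 m2 k j)"
      using Ann mpow_nonneg[OF Ann] k Suc.prems
      by (intro member_le_sum) (auto intro!: mult_nonneg_nonneg)
    finally show ?case by simp
  qed
  show ?thesis unfolding irreducible_mat_def
  proof (intro allI impI)
    fix i j assume ij: "i < K" "j < K"
    from even_path[OF nn irr ap ij] obtain n where "n > 0" "mpow K d (2*n) i j > 0" by blast
    then show "\<exists>n>0. 0 < mpow K (A2 K d m1 m2) n i j" using key ij by blast
  qed
qed

lemma identify:
  fixes A :: "nat \<Rightarrow> nat \<Rightarrow> real"
  assumes K: "K \<ge> 1" and nnA: "\<forall>i<K. \<forall>j<K. 0 \<le> A i j" and per: "perron_eigenvalue K A r"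
    and rpos: "r > 0"
    and psi: "\<forall>i<K. 0 < \<psi> i" and psieq: "\<forall>i<K. (\<Sum>j<K. A i j * \<psi> j) = \<mu> * \<psi> i"
    and t: "\<forall>i<K. 0 < t i" and teq: "\<forall>j<K. (\<Sum>i<K. A i j * t i) = \<mu>' * t j"
  shows "\<mu> = r \<and> \<mu>' = r"
proof -
  have K0: "0 < K" using K by simp
  have "is_eigenvalue K A (complex_of_real \<mu>)" unfolding is_eigenvalue_def
  proof (intro exI[of _ "\<lambda>i. complex_of_real (\<psi> i)"] conjI allI impI)
    show "\<exists>i<K. complex_of_real (\<psi> i) \<noteq> 0" using psi K0 by (intro exI[of _ 0]) auto
    fix i assume "i < K"
    then show "(\<Sum>j<K. complex_of_real (A i j) * complex_of_real (\<psi> j)) = complex_of_real \<mu> * complex_of_real (\<psi> i)"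
      using psieq by (simp flip: of_real_mult of_real_sum)
  qed
  with per have "cmod (complex_of_real \<mu>) \<le> r" by (auto simp: perron_eigenvalue_def)
  then have mu_le: "\<mu> \<le> r" by simp
  have "(\<Sum>i<K. t i * (\<Sum>j<K. A i j * \<psi> j)) = (\<Sum>j<K. \<psi> j * (\<Sum>i<K. A i j * t i))"
    by (simp add: sum_distrib_left mult_ac, rule sum.swap)
  also have "\<dots> = \<mu>' * (\<Sum>j<K. t j * \<psi> j)" using teq by (simp add: sum_distrib_left mult_ac)
  finally have h1: "(\<Sum>i<K. t i * (\<Sum>j<K. A i j * \<psi> j)) = \<mu>' * (\<Sum>j<K. t j * \<psi> j)" .
  have "(\<Sum>i<K. t i * (\<Sum>j<K. A i j * \<psi> j)) = (\<Sum>i<K. t i * (\<mu> * \<psi> i))"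
    using psieq by (intro sum.cong) auto
  also have "\<dots> = \<mu> * (\<Sum>j<K. t j * \<psi> j)" by (simp add: sum_distrib_left mult_ac)
  finally have "\<mu> * (\<Sum>j<K. t j * \<psi> j) = \<mu>' * (\<Sum>j<K. t j * \<psi> j)" using h1 by auto
  moreover have "0 < (\<Sum>j<K. t j * \<psi> j)" using t psi K0 by (intro sum_pos) (auto simp: lessThan_empty_iff)
  ultimately have mumu: "\<mu> = \<mu>'" by simp
  from per obtain x where x: "\<exists>i<K. x i \<noteq> 0"
    "\<forall>i<K. (\<Sum>j<K. complex_of_real (A i j) * x j) = complex_of_real r * x i"
    by (auto simp: perron_eigenvalue_def is_eigenvalue_def)
  have ineq: "r * cmod (x i) \<le> (\<Sum>j<K. A i j * cmod (x j))" if "i < K" for i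
  proof -
    have "r * cmod (x i) = cmod (\<Sum>j<K. complex_of_real (A i j) * x j)"
      using x(2) that rpos by (simp add: norm_mult)
    also have "\<dots> \<le> (\<Sum>j<K. cmod (complex_of_real (A i j) * x j))" by (rule norm_sum)
    also have "\<dots> = (\<Sum>j<K. A i j * cmod (x j))" using nnA that by (intro sum.cong) (auto simp: norm_mult)
    finally show ?thesis .
  qed
  have "r * (\<Sum>i<K. t i * cmod (x i)) = (\<Sum>i<K. t i * (r * cmod (x i)))"
    by (simp add: sum_distrib_left mult_ac)
  also have "\<dots> \<le> (\<Sum>i<K. t i * (\<Sum>j<K. A i j * cmod (x j)))"
    using ineq t by (intro sum_mono mult_left_mono) (auto intro: less_imp_le)
  also have "\<dots> = (\<Sum>j<K. cmod (x j) * (\<Sum>i<K. A i j * t i))"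
    by (simp add: sum_distrib_left mult_ac, rule sum.swap)
  also have "\<dots> = \<mu>' * (\<Sum>i<K. t i * cmod (x i))" using teq by (simp add: sum_distrib_left mult_ac)
  finally have "r * (\<Sum>i<K. t i * cmod (x i)) \<le> \<mu>' * (\<Sum>i<K. t i * cmod (x i))" .
  moreover have "0 < (\<Sum>i<K. t i * cmod (x i))"
  proof -
    obtain i0 where "i0 < K" "x i0 \<noteq> 0" using x(1) by auto
    then have "0 < t i0 * cmod (x i0)" using t by simp
    also have "\<dots> \<le> (\<Sum>i<K. t i * cmod (x i))"
      using t \<open>i0 < K\<close> by (intro member_le_sum) (auto intro: less_imp_le)
    finally show ?thesis .
  qed
  ultimately have "r \<le> \<mu>'" by simp
  with mu_le mumu show ?thesis by simp
qed




lemma jensen_ln: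
  fixes a x :: "'b \<Rightarrow> real"
  assumes fin: "finite A" and a: "\<forall>i\<in>A. 0 \<le> a i" and s: "(\<Sum>i\<in>A. a i) = 1"
    and x: "\<forall>i\<in>A. 0 < x i"
  shows "(\<Sum>i\<in>A. a i * ln (x i)) \<le> ln (\<Sum>i\<in>A. a i * x i)"
proof -
  obtain i0 where i0: "i0 \<in> A" "0 < a i0"
  proof (rule ccontr)
    assume nt: "\<not> thesis"
    have "\<forall>i\<in>A. a i \<le> 0"
    proof
      fix i assume "i \<in> A"
      show "a i \<le> 0"
      proof (rule ccontr)
        assume "\<not> a i \<le> 0"
        then have "0 < a i" by simp
        with that \<open>i \<in> A\<close> nt show False by blast
      qed
    qed
    then have "(\<Sum>i\<in>A. a i) \<le> 0" by (intro sum_nonpos) auto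
    with s show False by simp
  qed
  define X where "X = (\<Sum>i\<in>A. a i * x i)"
  have Xpos: "0 < X" unfolding X_def
    using i0 a x fin by (intro sum_pos2[of A i0]) (auto intro: mult_nonneg_nonneg less_imp_le)
  have "(\<Sum>i\<in>A. a i * ln (x i)) - ln X = (\<Sum>i\<in>A. a i * ln (x i)) - (\<Sum>i\<in>A. a i) * ln X"
    using s by simp
  also have "\<dots> = (\<Sum>i\<in>A. a i * ln (x i) - a i * ln X)"
    by (simp add: sum_distrib_right sum_subtractf)
  also have "\<dots> = (\<Sum>i\<in>A. a i * ln (x i / X))"
    using x Xpos by (intro sum.cong refl) (auto simp: ln_div right_diff_distrib)
  also have "\<dots> \<le> (\<Sum>i\<in>A. a i * (x i / X - 1))"
    using a x Xpos by (intro sum_mono mult_left_mono ln_le_minus_one) auto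
  also have "\<dots> = (\<Sum>i\<in>A. a i * x i) / X - (\<Sum>i\<in>A. a i)"
    by (simp add: right_diff_distrib sum_subtractf sum_divide_distrib)
  also have "\<dots> = 0" using s Xpos by (simp add: X_def)
  finally show ?thesis by (simp add: X_def)
qed

lemma dv_core:
  fixes S :: "'a set" and M :: "'a \<Rightarrow> 'a \<Rightarrow> real"
  assumes fin: "finite S" and Mnn: "\<forall>E\<in>S. \<forall>E'\<in>S. 0 \<le> M E' E" and vpos: "\<forall>E\<in>S. 0 < v E"
    and unn: "\<forall>E\<in>S. 0 \<le> u E" and r: "r > 0"
    and veq: "\<forall>E\<in>S. (\<Sum>E'\<in>S. v E' * M E' E) = r * v E"
    and ueq: "\<forall>E'\<in>S. (\<Sum>E\<in>S. M E' E * u E) = r * u E'"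
    and wpos: "\<forall>E\<in>S. 0 < w E"
  shows "(\<forall>E\<in>S. 0 < (\<Sum>E'\<in>S. w E' * M E' E)) \<and>
    (\<Sum>E\<in>S. v E * u E * ln (r * w E / (\<Sum>E'\<in>S. w E' * M E' E))) \<le> 0"
proof -
  define g where "g E = w E / v E" for E
  define Q where "Q E E' = v E' * M E' E / (r * v E)" for E E'
  define P where "P E = (\<Sum>E'\<in>S. w E' * M E' E)" for E
  have gpos: "0 < g E" if "E \<in> S" for E using that vpos wpos by (simp add: g_def)
  have Qnn: "0 \<le> Q E E'" if "E \<in> S" "E' \<in> S" for E E'
    unfolding Q_def using that vpos Mnn r
    by (intro divide_nonneg_pos mult_nonneg_nonneg mult_pos_pos) (auto simp: order_less_imp_le)
  have Qsum: "(\<Sum>E'\<in>S. Q E E') = 1" if "E \<in> S" for E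
  proof -
    have "(\<Sum>E'\<in>S. Q E E') = (\<Sum>E'\<in>S. v E' * M E' E) / (r * v E)"
      by (simp add: Q_def sum_divide_distrib)
    also have "\<dots> = 1" using veq that vpos[rule_format, OF that] r by simp
    finally show ?thesis .
  qed
  have QgP: "(\<Sum>E'\<in>S. Q E E' * g E') = P E / (r * v E)" if "E \<in> S" for E
  proof -
    have "(\<Sum>E'\<in>S. Q E E' * g E') = (\<Sum>E'\<in>S. w E' * M E' E / (r * v E))"
      using vpos by (intro sum.cong) (auto simp: Q_def g_def)
    also have "\<dots> = P E / (r * v E)" by (simp add: P_def sum_divide_distrib)
    finally show ?thesis .
  qed
  have QgPos: "0 < (\<Sum>E'\<in>S. Q E E' * g E')" if "E \<in> S" for E
  proof -
    obtain E0 where E0: "E0 \<in> S" "0 < Q E E0"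
    proof (rule ccontr)
      assume nt: "\<not> thesis"
      have "\<forall>E'\<in>S. Q E E' \<le> 0"
      proof
        fix E' assume "E' \<in> S"
        show "Q E E' \<le> 0"
        proof (rule ccontr)
          assume "\<not> Q E E' \<le> 0"
          then have "0 < Q E E'" by simp
          with that \<open>E' \<in> S\<close> nt show False by blast
        qed
      qed
      then have "(\<Sum>E'\<in>S. Q E E') \<le> 0" by (intro sum_nonpos) auto
      with Qsum[OF \<open>E \<in> S\<close>] show False by simp
    qed
    show ?thesis using fin E0 gpos Qnn that
      by (intro sum_pos2[of S E0]) (auto intro: mult_nonneg_nonneg less_imp_le)
  qed
  have Ppos: "0 < P E" if "E \<in> S" for E
  proof -
    have "P E = (r * v E) * (\<Sum>E'\<in>S. Q E E' * g E')" using QgP[OF that] vpos[rule_format, OF that] r by simp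
    then show ?thesis using QgPos[OF that] vpos r that by simp
  qed
  have pt: "ln (r * w E / P E) \<le> ln (g E) - (\<Sum>E'\<in>S. Q E E' * ln (g E'))" if "E \<in> S" for E
  proof -
    have "(\<Sum>E'\<in>S. Q E E' * ln (g E')) \<le> ln (\<Sum>E'\<in>S. Q E E' * g E')"
      using fin Qnn Qsum gpos that by (intro jensen_ln) auto
    also have "\<dots> = ln (P E / (r * v E))" using QgP[OF that] by simp
    finally have j: "(\<Sum>E'\<in>S. Q E E' * ln (g E')) \<le> ln (P E / (r * v E))" .
    have eq: "r * w E / P E = g E / (P E / (r * v E))"
      using vpos[rule_format, OF that] r Ppos[OF that] by (simp add: g_def field_simps)
    have "ln (g E / (P E / (r * v E))) = ln (g E) - ln (P E / (r * v E))"
      using gpos[OF that] Ppos[OF that] vpos[rule_format, OF that] r by (simp add: ln_div ln_mult)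
    then have "ln (r * w E / P E) = ln (g E) - ln (P E / (r * v E))" by (simp only: eq)
    with j show ?thesis by simp
  qed
  have "(\<Sum>E\<in>S. v E * u E * ln (r * w E / P E)) \<le>
        (\<Sum>E\<in>S. v E * u E * (ln (g E) - (\<Sum>E'\<in>S. Q E E' * ln (g E'))))"
    using pt vpos unn by (intro sum_mono mult_left_mono) (auto intro: mult_nonneg_nonneg less_imp_le)
  also have "\<dots> = (\<Sum>E\<in>S. v E * u E * ln (g E)) - (\<Sum>E\<in>S. \<Sum>E'\<in>S. v E * u E * (Q E E' * ln (g E')))"
    by (simp add: right_diff_distrib sum_subtractf sum_distrib_left)
  also have "(\<Sum>E\<in>S. \<Sum>E'\<in>S. v E * u E * (Q E E' * ln (g E'))) =
             (\<Sum>E'\<in>S. \<Sum>E\<in>S. v E * u E * (Q E E' * ln (g E')))"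
    by (rule sum.swap)
  also have "\<dots> = (\<Sum>E'\<in>S. (v E' * ln (g E') / r) * (\<Sum>E\<in>S. M E' E * u E))"
    unfolding sum_distrib_left
    by (intro sum.cong refl) (use vpos r in \<open>auto simp: Q_def field_simps\<close>)
  also have "\<dots> = (\<Sum>E'\<in>S. v E' * u E' * ln (g E'))"
    using ueq r by (intro sum.cong refl) auto
  finally show ?thesis using Ppos by (simp add: P_def)
qed




lemma pair_sum: "(\<Sum>E\<in>pairsK K. h E) = (\<Sum>i<K. \<Sum>j<K. h (i,j))"
  unfolding pairsK_def by (simp add: sum.cartesian_product)

locale dvset =
  fixes K :: nat and d :: "nat \<Rightarrow> nat \<Rightarrow> real" and m1 m2 t \<psi> :: "nat \<Rightarrow> real" and r :: real
  assumes K: "K \<ge> 1"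
    and nn: "\<forall>i<K. \<forall>j<K. 0 \<le> d i j"
    and rows: "\<forall>i<K. (\<Sum>j<K. d i j) = 1"
    and m1pos: "\<forall>i<K. 0 < m1 i" and m2pos: "\<forall>i<K. 0 < m2 i"
    and rpos: "r > 0"
    and tpos: "\<forall>i<K. 0 < t i"
    and teq: "\<forall>j<K. (\<Sum>i<K. A2 K d m1 m2 i j * t i) = r * t j"
    and psipos: "\<forall>i<K. 0 < \<psi> i"
    and psieq: "\<forall>i<K. (\<Sum>j<K. A2 K d m1 m2 i j * \<psi> j) = r * \<psi> i"
begin

definition "P = pairsK K"
definition "V E = m1 (fst E) * m2 (snd E)"
definition "v0 E = d (fst E) (snd E) * m1 (fst E) * m2 (snd E) * t (fst E)"
definition "phi l = (\<Sum>q<K. d l q * \<psi> q)"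
definition "S = {E\<in>P. 0 < d (fst E) (snd E)}"
definition "M E' E = Bmat d E' E * V E"

lemma finP: "finite P" by (simp add: P_def pairsK_def)
lemma memP: "E \<in> P \<longleftrightarrow> fst E < K \<and> snd E < K" by (cases E) (simp add: P_def pairsK_def)
lemma finS: "finite S" using finP by (simp add: S_def)
lemma SP: "S \<subseteq> P" by (auto simp: S_def)

lemma Vpos: "E \<in> P \<Longrightarrow> 0 < V E" using m1pos m2pos by (simp add: V_def memP)

lemma dnn: "E \<in> P \<Longrightarrow> 0 \<le> d (fst E) (snd E)" using nn by (simp add: memP)

lemma v0_nn: "E \<in> P \<Longrightarrow> 0 \<le> v0 E"
  using dnn m1pos m2pos tpos by (simp add: v0_def memP order_less_imp_le)

lemma v0_pos: "E \<in> S \<Longrightarrow> 0 < v0 E"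
  using m1pos m2pos tpos by (simp add: v0_def S_def memP)

lemma d_zero: assumes "E \<in> P" "E \<notin> S" shows "d (fst E) (snd E) = 0"
  using dnn[OF assms(1)] assms by (auto simp: S_def)

lemma v0_zero: "E \<in> P \<Longrightarrow> E \<notin> S \<Longrightarrow> v0 E = 0"
  using d_zero by (simp add: v0_def)

lemma row_pos: assumes "i < K" obtains q where "q < K" "0 < d i q"
proof (rule ccontr)
  assume nt: "\<not> thesis"
  have "\<forall>q<K. d i q \<le> 0"
  proof (intro allI impI)
    fix q assume "q < K"
    show "d i q \<le> 0"
    proof (rule ccontr)
      assume "\<not> d i q \<le> 0" then have "0 < d i q" by simp
      with that \<open>q < K\<close> nt show False by blast
    qed
  qed
  then have "(\<Sum>j<K. d i j) \<le> 0" by (intro sum_nonpos) auto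
  with rows assms show False by simp
qed

lemma phi_pos: assumes "l < K" shows "0 < phi l"
proof -
  obtain q where q: "q < K" "0 < d l q" using row_pos[OF assms] by blast
  show ?thesis unfolding phi_def
    using q psipos nn assms by (intro sum_pos2[of _ q]) (auto intro!: mult_nonneg_nonneg simp: order_less_imp_le)
qed

lemma I1: assumes "E \<in> P" shows "vB K d v0 E = r * d (fst E) (snd E) * t (fst E)"
proof -
  obtain k l where E: "E = (k,l)" by (cases E)
  have k: "k < K" using assms E by (simp add: memP)
  have "vB K d v0 E = (\<Sum>i<K. \<Sum>j<K. d i j * m1 i * m2 j * t i * (d j k * d k l))"
    unfolding vB_def pair_sum Bmat_def v0_def E by simp
  also have "\<dots> = d k l * (\<Sum>i<K. A2 K d m1 m2 i k * t i)"
    unfolding A2_def by (simp add: sum_distrib_left sum_distrib_right mult_ac)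
  also have "\<dots> = d k l * (r * t k)" using teq k by simp
  finally show ?thesis by (simp add: E mult_ac)
qed

lemma I2: assumes "E' \<in> P" shows "(\<Sum>E\<in>P. Bmat d E' E * V E * phi (snd E)) = r * phi (snd E')"
proof -
  obtain i j where E': "E' = (i,j)" by (cases E')
  have "(\<Sum>E\<in>P. Bmat d E' E * V E * phi (snd E)) =
        (\<Sum>k<K. \<Sum>l<K. d j k * d k l * (m1 k * m2 l) * (\<Sum>q<K. d l q * \<psi> q))"
    unfolding P_def pair_sum Bmat_def V_def phi_def E' by simp
  also have "\<dots> = (\<Sum>k<K. d j k * (\<Sum>l<K. \<Sum>q<K. m1 k * d k l * m2 l * d l q * \<psi> q))"
    by (simp add: sum_distrib_left mult_ac)
  also have "\<dots> = (\<Sum>k<K. d j k * (\<Sum>q<K. \<Sum>l<K. m1 k * d k l * m2 l * d l q * \<psi> q))"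
    by (subst sum.swap) simp
  also have "\<dots> = (\<Sum>k<K. d j k * (\<Sum>q<K. A2 K d m1 m2 k q * \<psi> q))"
    unfolding A2_def by (simp add: sum_distrib_right)
  also have "\<dots> = (\<Sum>k<K. d j k * (r * \<psi> k))"
    using psieq by (intro sum.cong) auto
  also have "\<dots> = r * phi j" by (simp add: phi_def sum_distrib_left mult_ac)
  finally show ?thesis by (simp add: E')
qed

end



context dvset begin

lemma Bnn: "E' \<in> P \<Longrightarrow> E \<in> P \<Longrightarrow> 0 \<le> Bmat d E' E"
  using nn by (simp add: Bmat_def memP)

lemma Mnn: "E' \<in> P \<Longrightarrow> E \<in> P \<Longrightarrow> 0 \<le> M E' E"
  using Bnn Vpos by (simp add: M_def order_less_imp_le)

lemma vB_v0_pos: "E \<in> S \<Longrightarrow> 0 < vB K d v0 E"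
  using I1 SP tpos rpos by (auto simp: S_def memP)

lemma ratio: assumes "E \<in> S" shows "v0 E / vB K d v0 E = V E / r"
  using I1[of E] assms SP tpos rpos by (auto simp: S_def memP v0_def V_def)

lemma vB_lin: "vB K d (\<lambda>E. v0 E + \<epsilon>) E = vB K d v0 E + \<epsilon> * (\<Sum>E'\<in>P. Bmat d E' E)"
  unfolding vB_def P_def by (simp add: distrib_right sum.distrib sum_distrib_left)

lemma veq: "\<forall>E\<in>S. (\<Sum>E'\<in>S. v0 E' * M E' E) = r * v0 E"
proof
  fix E assume E: "E \<in> S"
  have "(\<Sum>E'\<in>S. v0 E' * M E' E) = (\<Sum>E'\<in>P. v0 E' * M E' E)"
    using finP SP v0_zero by (intro sum.mono_neutral_left) auto
  also have "\<dots> = vB K d v0 E * V E"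
    unfolding vB_def M_def P_def by (simp add: sum_distrib_right sum_distrib_left mult_ac)
  also have "\<dots> = r * v0 E" using I1[of E] E SP by (auto simp: v0_def V_def)
  finally show "(\<Sum>E'\<in>S. v0 E' * M E' E) = r * v0 E" .
qed

lemma ueq: "\<forall>E'\<in>S. (\<Sum>E\<in>S. M E' E * phi (snd E)) = r * phi (snd E')"
proof
  fix E' assume E': "E' \<in> S"
  have "(\<Sum>E\<in>S. M E' E * phi (snd E)) = (\<Sum>E\<in>P. M E' E * phi (snd E))"
    using finP SP d_zero by (intro sum.mono_neutral_left) (auto simp: M_def Bmat_def)
  also have "\<dots> = r * phi (snd E')" using I2[of E'] E' SP by (auto simp: M_def)
  finally show "(\<Sum>E\<in>S. M E' E * phi (snd E)) = r * phi (snd E')" .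
qed

lemma R_eq: "R_fun K m1 m2 f = (\<Sum>E\<in>P. f E * ln (V E))"
  by (simp add: R_fun_def P_def V_def)

lemma I_infty:
  assumes E0: "E0 \<in> P" "E0 \<notin> S" and f0: "f E0 \<noteq> 0"
  shows "I_rate K d f = \<infinity>"
proof -
  have "(\<Sum>E\<in>pairsK K. dv_term (f E) (v E) (vB K d v E)) = \<infinity>" for v
  proof -
    have "vB K d v E0 = 0" using d_zero[OF E0] by (simp add: vB_def Bmat_def)
    then have "dv_term (f E0) (v E0) (vB K d v E0) = \<infinity>" using f0 by (simp add: dv_term_def)
    then show ?thesis using E0 finP by (simp add: sum_Pinfty P_def) (metis)
  qed
  moreover have "(\<lambda>E. 1::real) \<in> {v. \<forall>E\<in>pairsK K. 0 < v E}" by simp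
  ultimately have "\<infinity> \<le> I_rate K d f" unfolding I_rate_def
    by (metis (mono_tags, lifting) SUP_upper)
  then show ?thesis by simp
qed

lemma lower:
  assumes f: "f \<in> FE K" and supp: "\<forall>E\<in>P. f E \<noteq> 0 \<longrightarrow> E \<in> S"
  shows "ereal (R_fun K m1 m2 f - ln r) \<le> I_rate K d f"
proof -
  define c where "c E = (\<Sum>E'\<in>P. Bmat d E' E)" for E
  define G where "G \<epsilon> = (\<Sum>E\<in>P. if f E = 0 then 0 else f E * ln ((v0 E + \<epsilon>) / (vB K d v0 E + \<epsilon> * c E)))" for \<epsilon>
  have c_nn: "0 \<le> c E" if "E \<in> P" for E unfolding c_def using Bnn that by (intro sum_nonneg) auto
  have le: "ereal (G \<epsilon>) \<le> I_rate K d f" if eps: "0 < \<epsilon>" for \<epsilon>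
  proof -
    define v where "v E = v0 E + \<epsilon>" for E
    have vmem: "v \<in> {v. \<forall>E\<in>pairsK K. 0 < v E}"
      using v0_nn eps by (auto simp: v_def P_def add_nonneg_pos)
    have "(\<Sum>E\<in>pairsK K. dv_term (f E) (v E) (vB K d v E)) = (\<Sum>E\<in>P. ereal (if f E = 0 then 0 else f E * ln ((v0 E + \<epsilon>) / (vB K d v0 E + \<epsilon> * c E))))"
      unfolding P_def[symmetric]
    proof (intro sum.cong refl)
      fix E assume E: "E \<in> P"
      have vBe: "vB K d v E = vB K d v0 E + \<epsilon> * c E" unfolding v_def c_def by (rule vB_lin)
      show "dv_term (f E) (v E) (vB K d v E) = ereal (if f E = 0 then 0 else f E * ln ((v0 E + \<epsilon>) / (vB K d v0 E + \<epsilon> * c E)))"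
      proof (cases "f E = 0")
        case True then show ?thesis by (simp add: dv_term_def)
      next
        case False
        then have "E \<in> S" using supp E by auto
        then have "0 < vB K d v0 E + \<epsilon> * c E"
          using vB_v0_pos c_nn[OF E] eps by (simp add: add_pos_nonneg)
        then show ?thesis using False vBe by (simp add: dv_term_def v_def)
      qed
    qed
    also have "\<dots> = ereal (G \<epsilon>)" by (simp add: G_def sum_ereal)
    finally have "ereal (G \<epsilon>) = (\<Sum>E\<in>pairsK K. dv_term (f E) (v E) (vB K d v E))" by simp
    also have "\<dots> \<le> I_rate K d f" unfolding I_rate_def using vmem by (rule SUP_upper)
    finally show ?thesis .
  qed
  have lim: "(G \<longlongrightarrow> G 0) (at_right 0)"
    unfolding G_def
  proof (intro tendsto_sum)
    fix E assume E: "E \<in> P"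
    show "((\<lambda>\<epsilon>. if f E = 0 then 0 else f E * ln ((v0 E + \<epsilon>) / (vB K d v0 E + \<epsilon> * c E))) \<longlongrightarrow>
          (if f E = 0 then 0 else f E * ln ((v0 E + 0) / (vB K d v0 E + 0 * c E)))) (at_right 0)"
    proof (cases "f E = 0")
      case True then show ?thesis by simp
    next
      case False
      then have ES: "E \<in> S" using supp E by auto
      have p1: "0 < v0 E" "0 < vB K d v0 E" using v0_pos[OF ES] vB_v0_pos[OF ES] by auto
      have "((\<lambda>\<epsilon>. (v0 E + \<epsilon>) / (vB K d v0 E + \<epsilon> * c E)) \<longlongrightarrow> (v0 E + 0) / (vB K d v0 E + 0 * c E)) (at_right 0)"
        by (intro tendsto_intros) (use p1 in auto)
      then have "((\<lambda>\<epsilon>. ln ((v0 E + \<epsilon>) / (vB K d v0 E + \<epsilon> * c E))) \<longlongrightarrow> ln ((v0 E + 0) / (vB K d v0 E + 0 * c E))) (at_right 0)"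
        by (rule tendsto_ln) (use p1 in auto)
      then show ?thesis using False by (simp add: tendsto_mult_left)
    qed
  qed
  have G0: "G 0 = R_fun K m1 m2 f - ln r"
  proof -
    have "G 0 = (\<Sum>E\<in>P. f E * (ln (V E) - ln r))"
      unfolding G_def
    proof (intro sum.cong refl)
      fix E assume E: "E \<in> P"
      show "(if f E = 0 then 0 else f E * ln ((v0 E + 0) / (vB K d v0 E + 0 * c E))) = f E * (ln (V E) - ln r)"
      proof (cases "f E = 0")
        case True then show ?thesis by simp
      next
        case False
        then have ES: "E \<in> S" using supp E by auto
        then show ?thesis using ratio[OF ES] Vpos[OF E] rpos False by (simp add: ln_div)
      qed
    qed
    also have "\<dots> = (\<Sum>E\<in>P. f E * ln (V E)) - (\<Sum>E\<in>P. f E) * ln r"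
      by (simp add: right_diff_distrib sum_subtractf sum_distrib_right)
    also have "(\<Sum>E\<in>P. f E) = 1" using f by (simp add: FE_def P_def)
    finally show ?thesis by (simp add: R_eq)
  qed
  have "ereal (G 0) \<le> I_rate K d f"
  proof (rule tendsto_le[of "at_right (0::real)" "\<lambda>_. I_rate K d f" "I_rate K d f" "\<lambda>\<epsilon>. ereal (G \<epsilon>)"])
    show "at_right (0::real) \<noteq> bot" by simp
    show "((\<lambda>\<epsilon>. ereal (G \<epsilon>)) \<longlongrightarrow> ereal (G 0)) (at_right 0)" using lim by (simp add: lim_ereal)
    show "\<forall>\<^sub>F \<epsilon> in at_right 0. ereal (G \<epsilon>) \<le> I_rate K d f"
      using eventually_at_right_less[of "0::real"] by (rule eventually_mono) (rule le)
  qed simp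
  then show ?thesis using G0 by simp
qed

end



context dvset begin

definition "Z = (\<Sum>E\<in>P. v0 E * phi (snd E))"
definition "f0 E = v0 E * phi (snd E) / Z"

lemma phi_snd_pos: "E \<in> P \<Longrightarrow> 0 < phi (snd E)" using phi_pos by (simp add: memP)

lemma Zpos: "0 < Z"
proof -
  have "0 < K" using K by simp
  obtain q where q: "q < K" "0 < d 0 q" using row_pos[OF \<open>0 < K\<close>] by blast
  have ES: "(0,q) \<in> S" using q \<open>0 < K\<close> by (simp add: S_def memP)
  then have EP: "(0,q) \<in> P" using SP by auto
  show ?thesis unfolding Z_def
    using finP EP v0_pos[OF ES] phi_snd_pos[OF EP] v0_nn phi_snd_pos
    by (intro sum_pos2[of P "(0,q)"]) (auto intro!: mult_nonneg_nonneg simp: order_less_imp_le)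
qed

lemma f0_FE: "f0 \<in> FE K"
proof -
  have "\<forall>E\<in>P. 0 \<le> f0 E" using v0_nn phi_snd_pos Zpos
    by (auto simp: f0_def intro!: divide_nonneg_pos mult_nonneg_nonneg simp: order_less_imp_le)
  moreover have "(\<Sum>E\<in>P. f0 E) = 1" using Zpos by (simp add: f0_def sum_divide_distrib[symmetric] Z_def)
  ultimately show ?thesis by (simp add: FE_def P_def)
qed

lemma f0_supp: "\<forall>E\<in>P. f0 E \<noteq> 0 \<longrightarrow> E \<in> S"
  using v0_zero by (auto simp: f0_def)

lemma f0_pos: assumes "E \<in> S" shows "0 < f0 E"
proof -
  have "E \<in> P" using assms SP by auto
  then show ?thesis using v0_pos[OF assms] phi_snd_pos[of E] Zpos
    unfolding f0_def by (intro divide_pos_pos mult_pos_pos) auto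
qed

lemma f0_upper: "I_rate K d f0 \<le> ereal (R_fun K m1 m2 f0 - ln r)"
  unfolding I_rate_def
proof (rule SUP_least)
  fix w :: "nat \<times> nat \<Rightarrow> real" assume "w \<in> {v. \<forall>E\<in>pairsK K. 0 < v E}"
  then have wpos: "\<forall>E\<in>P. 0 < w E" by (simp add: P_def)
  define Q where "Q E = (\<Sum>E'\<in>S. w E' * M E' E)" for E
  have dv: "(\<forall>E\<in>S. 0 < Q E) \<and> (\<Sum>E\<in>S. v0 E * phi (snd E) * ln (r * w E / Q E)) \<le> 0"
    unfolding Q_def
  proof (rule dv_core[OF finS])
    show "\<forall>E\<in>S. \<forall>E'\<in>S. 0 \<le> M E' E" using Mnn SP by blast
    show "\<forall>E\<in>S. 0 < v0 E" using v0_pos by auto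
    show "\<forall>E\<in>S. 0 \<le> phi (snd E)" using phi_snd_pos SP by (auto simp: order_less_imp_le)
    show "0 < r" by (rule rpos)
    show "\<forall>E\<in>S. (\<Sum>E'\<in>S. v0 E' * M E' E) = r * v0 E" by (rule veq)
    show "\<forall>E'\<in>S. (\<Sum>E\<in>S. M E' E * phi (snd E)) = r * phi (snd E')" by (rule ueq)
    show "\<forall>E\<in>S. 0 < w E" using wpos SP by auto
  qed
  have vBQ: "Q E \<le> vB K d w E * V E" if "E \<in> S" for E
  proof -
    have EP: "E \<in> P" using that SP by auto
    have "Q E \<le> (\<Sum>E'\<in>P. w E' * M E' E)" unfolding Q_def
      using finP SP wpos Mnn[OF _ EP] by (intro sum_mono2) (auto intro!: mult_nonneg_nonneg simp: order_less_imp_le)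
    also have "\<dots> = vB K d w E * V E"
      unfolding vB_def M_def P_def by (simp add: sum_distrib_right sum_distrib_left mult_ac)
    finally show ?thesis .
  qed
  have vBpos: "0 < vB K d w E" if "E \<in> S" for E
  proof -
    have "0 < vB K d w E * V E" using vBQ[OF that] dv[THEN conjunct1] that by force
    then show ?thesis using Vpos[of E] that SP by (auto simp: zero_less_mult_iff)
  qed
  have "(\<Sum>E\<in>pairsK K. dv_term (f0 E) (w E) (vB K d w E)) =
        (\<Sum>E\<in>P. ereal (if f0 E = 0 then 0 else f0 E * ln (w E / vB K d w E)))"
    unfolding P_def[symmetric]
  proof (intro sum.cong refl)
    fix E assume E: "E \<in> P"
    show "dv_term (f0 E) (w E) (vB K d w E) = ereal (if f0 E = 0 then 0 else f0 E * ln (w E / vB K d w E))"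
    proof (cases "f0 E = 0")
      case True then show ?thesis by (simp add: dv_term_def)
    next
      case False
      then have "E \<in> S" using f0_supp E by auto
      then show ?thesis using False vBpos[of E] by (simp add: dv_term_def)
    qed
  qed
  also have "\<dots> = ereal (\<Sum>E\<in>S. f0 E * ln (w E / vB K d w E))"
  proof -
    have "(\<Sum>E\<in>P. (if f0 E = 0 then 0 else f0 E * ln (w E / vB K d w E))) =
          (\<Sum>E\<in>S. (if f0 E = 0 then 0 else f0 E * ln (w E / vB K d w E)))"
      using finP SP f0_supp by (intro sum.mono_neutral_right) auto
    also have "\<dots> = (\<Sum>E\<in>S. f0 E * ln (w E / vB K d w E))" by (intro sum.cong refl) auto
    finally show ?thesis by (simp add: sum_ereal)
  qed
  finally have eqs: "(\<Sum>E\<in>pairsK K. dv_term (f0 E) (w E) (vB K d w E)) = ereal (\<Sum>E\<in>S. f0 E * ln (w E / vB K d w E))" .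
  have "(\<Sum>E\<in>S. f0 E * ln (w E / vB K d w E)) \<le> (\<Sum>E\<in>S. f0 E * (ln (r * w E / Q E) + (ln (V E) - ln r)))"
  proof (intro sum_mono mult_left_mono)
    fix E assume ES: "E \<in> S"
    have EP: "E \<in> P" using ES SP by auto
    have pos: "0 < w E" "0 < vB K d w E" "0 < V E" "0 < Q E"
      using wpos EP vBpos[OF ES] Vpos[OF EP] dv[THEN conjunct1] ES by auto
    have "w E / vB K d w E = (r * w E / (vB K d w E * V E)) * V E / r" using pos rpos by (simp add: field_simps)
    then have "ln (w E / vB K d w E) = ln (r * w E / (vB K d w E * V E)) + (ln (V E) - ln r)"
      using pos rpos by (simp add: ln_div ln_mult)
    also have "ln (r * w E / (vB K d w E * V E)) \<le> ln (r * w E / Q E)"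
      using pos rpos vBQ[OF ES] by (simp add: divide_left_mono)
    finally show "ln (w E / vB K d w E) \<le> ln (r * w E / Q E) + (ln (V E) - ln r)" by simp
    show "0 \<le> f0 E" using f0_pos[OF ES] by simp
  qed
  also have "\<dots> = (\<Sum>E\<in>S. v0 E * phi (snd E) * ln (r * w E / Q E)) / Z + (\<Sum>E\<in>S. f0 E * (ln (V E) - ln r))"
    by (simp add: distrib_left sum.distrib sum_divide_distrib f0_def)
  also have "\<dots> \<le> (\<Sum>E\<in>S. f0 E * (ln (V E) - ln r))"
    using dv[THEN conjunct2] Zpos by (simp add: divide_nonpos_pos)
  also have "(\<Sum>E\<in>S. f0 E * (ln (V E) - ln r)) = (\<Sum>E\<in>P. f0 E * (ln (V E) - ln r))"
    using finP SP f0_supp by (intro sum.mono_neutral_left) auto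
  also have "\<dots> = (\<Sum>E\<in>P. f0 E * ln (V E)) - (\<Sum>E\<in>P. f0 E) * ln r"
    by (simp add: right_diff_distrib sum_subtractf sum_distrib_right)
  also have "(\<Sum>E\<in>P. f0 E) = 1" using f0_FE by (simp add: FE_def P_def)
  finally have "(\<Sum>E\<in>S. f0 E * ln (w E / vB K d w E)) \<le> R_fun K m1 m2 f0 - ln r"
    by (simp add: R_eq)
  then show "(\<Sum>E\<in>pairsK K. dv_term (f0 E) (w E) (vB K d w E)) \<le> ereal (R_fun K m1 m2 f0 - ln r)"
    using eqs by simp
qed

end



theorem theorem5p3:
  fixes K :: nat
    and d :: "nat \<Rightarrow> nat \<Rightarrow> real"
    and N1 N2 :: "nat \<Rightarrow> nat pmf"
    and \<rho> :: real
  assumes K_pos: "K \<ge> 1"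
    and stoch: "stochastic_mat K d"
    and irred: "irreducible_mat K d"
    and aper: "aperiodic_mat K d"
    and LlogL1: "\<forall>i<K. integrable (measure_pmf (N1 i)) (\<lambda>n. real n * logplus (real n))"
    and LlogL2: "\<forall>i<K. integrable (measure_pmf (N2 i)) (\<lambda>n. real n * logplus (real n))"
    and mpos1: "\<forall>i<K. mean_off (N1 i) > 0"
    and mpos2: "\<forall>i<K. mean_off (N2 i) > 0"
    and rho_pos: "\<rho> > 0"
    and perron: "perron_eigenvalue K (A2 K d (\<lambda>i. mean_off (N1 i)) (\<lambda>i. mean_off (N2 i))) (\<rho>\<^sup>2)"
  shows "(\<exists>f\<in>FE K. ereal (R_fun K (\<lambda>i. mean_off (N1 i)) (\<lambda>i. mean_off (N2 i)) f) - I_rate K d f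
                    = ereal (2 * ln \<rho>))
       \<and> (\<forall>f\<in>FE K. ereal (R_fun K (\<lambda>i. mean_off (N1 i)) (\<lambda>i. mean_off (N2 i)) f) - I_rate K d f
                    \<le> ereal (2 * ln \<rho>))"
proof -
  define m1 where "m1 = (\<lambda>i. mean_off (N1 i))"
  define m2 where "m2 = (\<lambda>i. mean_off (N2 i))"
  define A where "A = A2 K d m1 m2"
  have nn: "\<forall>i<K. \<forall>j<K. 0 \<le> d i j" and rows: "\<forall>i<K. (\<Sum>j<K. d i j) = 1"
    using stoch by (auto simp: stochastic_mat_def)
  have m1pos: "\<forall>i<K. 0 < m1 i" using mpos1 by (simp add: m1_def)
  have m2pos: "\<forall>i<K. 0 < m2 i" using mpos2 by (simp add: m2_def)
  have per: "perron_eigenvalue K A (\<rho>\<^sup>2)" using perron by (simp add: A_def m1_def m2_def)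
  have Ann: "\<forall>i<K. \<forall>j<K. 0 \<le> A i j" unfolding A_def by (rule A2_nonneg[OF nn m1pos m2pos])
  have Airr: "irreducible_mat K A" unfolding A_def by (rule A2_irr[OF nn irred aper m1pos m2pos])
  obtain \<mu> \<psi> where psi: "\<forall>i<K. 0 < \<psi> i" "\<forall>i<K. (\<Sum>j<K. A i j * \<psi> j) = \<mu> * \<psi> i"
    using perron_vec[OF K_pos Ann Airr] by blast
  have Atnn: "\<forall>i<K. \<forall>j<K. 0 \<le> (\<lambda>i j. A j i) i j" using Ann by simp
  obtain \<mu>' t where t: "\<forall>i<K. 0 < t i" "\<forall>i<K. (\<Sum>j<K. A j i * t j) = \<mu>' * t i"
    using perron_vec[OF K_pos Atnn irreducible_transpose[OF Airr]] by auto
  have rpos: "0 < \<rho>\<^sup>2" using rho_pos by simp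
  have ids: "\<mu> = \<rho>\<^sup>2 \<and> \<mu>' = \<rho>\<^sup>2"
    using identify[OF K_pos Ann per rpos psi(1) psi(2) t(1)] t(2) by blast
  interpret dvset K d m1 m2 t \<psi> "\<rho>\<^sup>2"
  proof
    show "K \<ge> 1" by (rule K_pos)
    show "\<forall>i<K. \<forall>j<K. 0 \<le> d i j" by (rule nn)
    show "\<forall>i<K. (\<Sum>j<K. d i j) = 1" by (rule rows)
    show "\<forall>i<K. 0 < m1 i" by (rule m1pos)
    show "\<forall>i<K. 0 < m2 i" by (rule m2pos)
    show "0 < \<rho>\<^sup>2" by (rule rpos)
    show "\<forall>i<K. 0 < t i" by (rule t(1))
    show "\<forall>j<K. (\<Sum>i<K. A2 K d m1 m2 i j * t i) = \<rho>\<^sup>2 * t j" using t(2) ids by (simp add: A_def)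
    show "\<forall>i<K. 0 < \<psi> i" by (rule psi(1))
    show "\<forall>i<K. (\<Sum>j<K. A2 K d m1 m2 i j * \<psi> j) = \<rho>\<^sup>2 * \<psi> i" using psi(2) ids by (simp add: A_def)
  qed
  have lnr: "ln (\<rho>\<^sup>2) = 2 * ln \<rho>" using rho_pos by (simp add: ln_realpow)
  have part1: "ereal (R_fun K m1 m2 f0) - I_rate K d f0 = ereal (2 * ln \<rho>)"
  proof -
    have "I_rate K d f0 = ereal (R_fun K m1 m2 f0 - ln (\<rho>\<^sup>2))"
      using lower[OF f0_FE f0_supp] f0_upper by (rule antisym[rotated])
    then show ?thesis using lnr by simp
  qed
  have part2: "ereal (R_fun K m1 m2 f) - I_rate K d f \<le> ereal (2 * ln \<rho>)" if f: "f \<in> FE K" for f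
  proof (cases "\<exists>E\<in>P. f E \<noteq> 0 \<and> E \<notin> S")
    case True
    then obtain E0 where "E0 \<in> P" "f E0 \<noteq> 0" "E0 \<notin> S" by blast
    then have "I_rate K d f = \<infinity>" using I_infty by blast
    then show ?thesis by simp
  next
    case False
    then have "\<forall>E\<in>P. f E \<noteq> 0 \<longrightarrow> E \<in> S" by blast
    from lower[OF f this] have le: "ereal (R_fun K m1 m2 f - ln (\<rho>\<^sup>2)) \<le> I_rate K d f" .
    show ?thesis
    proof (cases "I_rate K d f" rule: ereal_cases)
      case (real x)
      then show ?thesis using le lnr by simp
    next
      case PInf then show ?thesis by simp
    next
      case MInf then show ?thesis using le by simp
    qed
  qed
  show ?thesis unfolding m1_def[symmetric] m2_def[symmetric]
    using part1 part2 f0_FE by blast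
qed



end
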